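(* Let $\mathcal{C}$ be a covering of a finite set $E$. For $x\in E$ let $N(x)=\bigcap\{K\in\mathcal{C}:x\in K\}$, and define $XH:2^E\to 2^E$ by $XH(X)=\{x\in E:N(x)\cap X\neq\emptyset\}$. Then $\{N(x):x\in E\}$ forms a partition of $E$ if and only if $XH$ is the closure operator of some matroid on $E$.
   Context: A covering of $E$ is a family of nonempty subsets of $E$ with union $E$. "$\{N(x):x\in E\}$ forms a partition" means that the distinct sets among the $N(x)$ are pairwise disjoint (their union is $E$ since $x\in N(x)$). The closure operator of a matroid with rank function $r$ is $cl(X)=\{a\in E:r(X\cup\{a\})=r(X)\}$. *)

theory Defs
  imports Main
begin

definition covering :: "'a set set \<Rightarrow> 'a set \<Rightarrow> bool" where
  "covering C E \<longleftrightarrow> (\<forall>K\<in>C. K \<noteq> {} \<and> K \<subseteq> E) \<and> \<Union>C = E"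

definition Nset :: "'a set set \<Rightarrow> 'a \<Rightarrow> 'a set" where
  "Nset C x = \<Inter>{K \<in> C. x \<in> K}"

definition XH :: "'a set set \<Rightarrow> 'a set \<Rightarrow> 'a set \<Rightarrow> 'a set" where
  "XH C E X = {x \<in> E. Nset C x \<inter> X \<noteq> {}}"

definition N_partition :: "'a set set \<Rightarrow> 'a set \<Rightarrow> bool" where
  "N_partition C E \<longleftrightarrow> (\<forall>x\<in>E. \<forall>y\<in>E. Nset C x = Nset C y \<or> Nset C x \<inter> Nset C y = {})"

definition matroid_rank :: "'a set \<Rightarrow> ('a set \<Rightarrow> nat) \<Rightarrow> bool" where
  "matroid_rank E r \<longleftrightarrow> finite E \<and>
     (\<forall>X. X \<subseteq> E \<longrightarrow> r X \<le> card X) \<and>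
     (\<forall>X Y. X \<subseteq> Y \<and> Y \<subseteq> E \<longrightarrow> r X \<le> r Y) \<and>
     (\<forall>X Y. X \<subseteq> E \<and> Y \<subseteq> E \<longrightarrow> r (X \<union> Y) + r (X \<inter> Y) \<le> r X + r Y)"

definition matroid_cl :: "'a set \<Rightarrow> ('a set \<Rightarrow> nat) \<Rightarrow> 'a set \<Rightarrow> 'a set" where
  "matroid_cl E r X = {a \<in> E. r (X \<union> {a}) = r X}"

end

theory Submission
  imports Defs
begin

lemma self_in_N: "x \<in> Nset C x"
  unfolding Nset_def by blast

lemma N_sub_E: "covering C E \<Longrightarrow> x \<in> E \<Longrightarrow> Nset C x \<subseteq> E"
  unfolding Nset_def covering_def by blast

lemma N_trans: "z \<in> Nset C x \<Longrightarrow> Nset C z \<subseteq> Nset C x"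
  unfolding Nset_def by blast

lemma card_union_inter_le:
  assumes "finite A" "finite B" "D \<subseteq> A \<inter> B"
  shows "card (A \<union> B) + card D \<le> card A + card B"
proof -
  have "card D \<le> card (A \<inter> B)" using assms by (intro card_mono) auto
  moreover have "card (A \<union> B) + card (A \<inter> B) = card A + card B"
    using assms card_Un_Int[of A B] by simp
  ultimately show ?thesis by linarith
qed

theorem theorem10:
  fixes C :: "'a set set" and E :: "'a set"
  assumes "finite E" and "covering C E"
  shows "N_partition C E \<longleftrightarrow>
    (\<exists>r. matroid_rank E r \<and> (\<forall>X. X \<subseteq> E \<longrightarrow> XH C E X = matroid_cl E r X))"
proof
  assume P: "N_partition C E"
  have eq: "Nset C y = Nset C x" if "x \<in> E" "y \<in> Nset C x" for x y
  proof -
    have "y \<in> E" using N_sub_E[OF assms(2) that(1)] that(2) by blast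
    thus ?thesis using P that self_in_N[of y C] unfolding N_partition_def by blast
  qed
  define r where "r X = card (Nset C ` X)" for X
  have "matroid_rank E r"
    unfolding matroid_rank_def
  proof (intro conjI allI impI)
    show "finite E" by fact
    fix X assume "X \<subseteq> E" thus "r X \<le> card X" unfolding r_def
      using \<open>finite E\<close> by (simp add: card_image_le finite_subset)
  next
    fix X Y assume "X \<subseteq> Y \<and> Y \<subseteq> E" thus "r X \<le> r Y" unfolding r_def
      using \<open>finite E\<close> by (meson card_mono finite_imageI finite_subset image_mono)
  next
    fix X Y assume a: "X \<subseteq> E \<and> Y \<subseteq> E"
    have "card (Nset C ` X \<union> Nset C ` Y) + card (Nset C ` (X \<inter> Y)) \<le> card (Nset C ` X) + card (Nset C ` Y)"
      using a \<open>finite E\<close> by (intro card_union_inter_le) (auto intro: finite_subset)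
    thus "r (X \<union> Y) + r (X \<inter> Y) \<le> r X + r Y" unfolding r_def by (simp add: image_Un)
  qed
  moreover have "XH C E X = matroid_cl E r X" if "X \<subseteq> E" for X
  proof -
    have fin: "finite (Nset C ` X)" using that \<open>finite E\<close> by (auto intro: finite_subset)
    have "a \<in> XH C E X \<longleftrightarrow> a \<in> matroid_cl E r X" for a
    proof (cases "a \<in> E")
      case True
      have "Nset C a \<inter> X \<noteq> {} \<longleftrightarrow> Nset C a \<in> Nset C ` X"
      proof
        assume "Nset C a \<inter> X \<noteq> {}"
        then obtain y where "y \<in> X" "y \<in> Nset C a" by blast
        hence "Nset C y = Nset C a" using eq[OF True] by blast
        thus "Nset C a \<in> Nset C ` X" using \<open>y \<in> X\<close> by (metis imageI)
      next
        assume "Nset C a \<in> Nset C ` X"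
        then obtain y where "y \<in> X" "Nset C a = Nset C y" by blast
        thus "Nset C a \<inter> X \<noteq> {}" using self_in_N[of y C] by auto
      qed
      moreover have "r (X \<union> {a}) = r X \<longleftrightarrow> Nset C a \<in> Nset C ` X"
        unfolding r_def using fin by (cases "Nset C a \<in> Nset C ` X") (simp_all add: insert_absorb)
      ultimately show ?thesis unfolding XH_def matroid_cl_def using True by auto
    qed (auto simp: XH_def matroid_cl_def)
    thus ?thesis by blast
  qed
  ultimately show "\<exists>r. matroid_rank E r \<and> (\<forall>X. X \<subseteq> E \<longrightarrow> XH C E X = matroid_cl E r X)" by blast
next
  assume "\<exists>r. matroid_rank E r \<and> (\<forall>X. X \<subseteq> E \<longrightarrow> XH C E X = matroid_cl E r X)"
  then obtain r where M: "matroid_rank E r" and H: "\<And>X. X \<subseteq> E \<Longrightarrow> XH C E X = matroid_cl E r X"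
    by blast
  have card: "\<And>X. X \<subseteq> E \<Longrightarrow> r X \<le> card X"
    using M unfolding matroid_rank_def by simp
  have mono: "\<And>X Y. X \<subseteq> Y \<Longrightarrow> Y \<subseteq> E \<Longrightarrow> r X \<le> r Y"
    using M unfolding matroid_rank_def by simp
  have r0: "r {} = 0" using card[of "{}"] by simp
  have sym: "a \<in> Nset C b" if "a \<in> E" "b \<in> E" "b \<in> Nset C a" for a b
  proof -
    have "a \<in> XH C E {b}" unfolding XH_def using that self_in_N[of b C] by blast
    hence ab: "r ({b} \<union> {a}) = r {b}" using H[of "{b}"] that unfolding matroid_cl_def by auto
    have "XH C E {} = {}" unfolding XH_def by auto
    hence "a \<notin> matroid_cl E r {}" using H[of "{}"] by auto
    hence "r {a} \<noteq> 0" using that r0 unfolding matroid_cl_def by auto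
    moreover have "r {a} \<le> 1" using card[of "{a}"] that by auto
    ultimately have ra: "r {a} = 1" by linarith
    have "r {a} \<le> r {a, b}" using that by (intro mono) auto
    moreover have "r {b} \<le> 1" using card[of "{b}"] that by auto
    moreover have "{b} \<union> {a} = {a,b}" "{a} \<union> {b} = {a,b}" by auto
    ultimately have "r ({a} \<union> {b}) = r {a}" using ab ra by simp
    hence "b \<in> matroid_cl E r {a}" using that unfolding matroid_cl_def by auto
    hence "b \<in> XH C E {a}" using H[of "{a}"] that by auto
    thus ?thesis unfolding XH_def by auto
  qed
  have eqN: "Nset C b = Nset C a" if "a \<in> E" "b \<in> Nset C a" for a b
  proof -
    have "b \<in> E" using N_sub_E[OF assms(2) that(1)] that(2) by blast
    have "a \<in> Nset C b" using sym[OF that(1) \<open>b \<in> E\<close> that(2)] .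
    hence "Nset C a \<subseteq> Nset C b" by (rule N_trans)
    moreover have "Nset C b \<subseteq> Nset C a" using that(2) by (rule N_trans)
    ultimately show ?thesis by (rule equalityI[rotated])
  qed
  show "N_partition C E" unfolding N_partition_def
  proof (intro ballI)
    fix x y assume "x \<in> E" "y \<in> E"
    show "Nset C x = Nset C y \<or> Nset C x \<inter> Nset C y = {}"
    proof (cases "Nset C x \<inter> Nset C y = {}")
      case False
      then obtain z where "z \<in> Nset C x" "z \<in> Nset C y" by blast
      have "Nset C z = Nset C x" by (rule eqN) fact+
      moreover have "Nset C z = Nset C y" by (rule eqN) fact+
      ultimately show ?thesis by simp
    qed simp
  qed
qed

end
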